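(* Let $\mathcal{A}\subset\mathbb{N}$ be an infinite set and, for each $n\in\mathcal{A}$, let $C_n(\mathbf{a}_n)$ be a circulant graph on $n$ vertices. Then there exists a sequence $\{\mathcal{B}_n\}_{n\in\mathcal{A}}$, where each $\mathcal{B}_n$ is an orthonormal basis of $\mathbb{C}^n$ consisting of eigenvectors of $A(C_n(\mathbf{a}_n))$, with the following property. For every $p\in[0,1]$, every sequence of vertex subsets $S_n\subset\{0,\dots,n-1\}$ with $\lim_{n\to\infty}|S_n|/n=p$, and every sequence $\varphi_n\in\mathcal{B}_n$, we have $$\lim_{n\to\infty}\mu_{\varphi_n}(S_n)=p.$$
   Context: A circulant graph $C_n(a_1,\dots,a_m)$, with integers $1\le a_1<\dots<a_m\le n/2$, has vertex set $V=\{0,1,\dots,n-1\}$, and $i\sim j$ if and only if $i-j\equiv \pm a_k \pmod n$ for some $k\in\{1,\dots,m\}$. We write $\mathbf{a}=(a_1,\dots,a_m)$. Its adjacency matrix $A(C_n(\mathbf{a}))$ is the $n\times n$ matrix with $A_{ij}=1$ if $i\sim j$ and $A_{ij}=0$ otherwise. For a vector $\psi\in\mathbb{C}^n$ with $\|\psi\|_{\ell^2}=1$, the probability measure on the vertices is $\mu_\psi=\sum_{v\in V}|\psi(v)|^2\delta_v$, so that $\mu_\psi(S)=\sum_{v\in S}|\psi(v)|^2$ for $S\subset V$. *)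

theory Defs
  imports "HOL-Analysis.Analysis"
begin

text \<open>Vectors in C^n are represented as functions nat => complex vanishing outside {0..<n}.\<close>

text \<open>The step set {a_1,...,a_m} of a circulant graph C_n(a_1,...,a_m): 1 <= a_1 < ... < a_m <= n/2.\<close>
definition circulant_steps :: "nat \<Rightarrow> nat set \<Rightarrow> bool" where
  "circulant_steps n a \<longleftrightarrow> finite a \<and> a \<noteq> {} \<and> a \<subseteq> {1..n div 2}"

definition circ_adj :: "nat \<Rightarrow> nat set \<Rightarrow> nat \<Rightarrow> nat \<Rightarrow> complex" where
  "circ_adj n a i j =
     (if \<exists>k\<in>a. (int i - int j) mod int n = int k mod int n
              \<or> (int i - int j) mod int n = (- int k) mod int n then 1 else 0)"

definition cvec :: "nat \<Rightarrow> (nat \<Rightarrow> complex) \<Rightarrow> bool" where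
  "cvec n v \<longleftrightarrow> (\<forall>i\<ge>n. v i = 0)"

definition cinner :: "nat \<Rightarrow> (nat \<Rightarrow> complex) \<Rightarrow> (nat \<Rightarrow> complex) \<Rightarrow> complex" where
  "cinner n v w = (\<Sum>i<n. v i * cnj (w i))"

definition is_eigenvector :: "nat \<Rightarrow> (nat \<Rightarrow> nat \<Rightarrow> complex) \<Rightarrow> (nat \<Rightarrow> complex) \<Rightarrow> bool" where
  "is_eigenvector n M v \<longleftrightarrow> cvec n v \<and> (\<exists>i<n. v i \<noteq> 0) \<and>
     (\<exists>ev. \<forall>i<n. (\<Sum>j<n. M i j * v j) = ev * v i)"

definition orthonormal_basis :: "nat \<Rightarrow> (nat \<Rightarrow> complex) set \<Rightarrow> bool" where
  "orthonormal_basis n B \<longleftrightarrow> finite B \<and>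
     (\<forall>v\<in>B. cvec n v \<and> cinner n v v = 1) \<and>
     (\<forall>v\<in>B. \<forall>w\<in>B. v \<noteq> w \<longrightarrow> cinner n v w = 0) \<and>
     (\<forall>x. cvec n x \<longrightarrow> (\<exists>c. x = (\<lambda>i. \<Sum>v\<in>B. c v * v i)))"

definition orthonormal_eigenbasis :: "nat \<Rightarrow> (nat \<Rightarrow> nat \<Rightarrow> complex) \<Rightarrow> (nat \<Rightarrow> complex) set \<Rightarrow> bool" where
  "orthonormal_eigenbasis n M B \<longleftrightarrow> orthonormal_basis n B \<and> (\<forall>v\<in>B. is_eigenvector n M v)"

definition vmeasure :: "(nat \<Rightarrow> complex) \<Rightarrow> nat set \<Rightarrow> real" where
  "vmeasure \<psi> S = (\<Sum>v\<in>S. (cmod (\<psi> v))^2)"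

end

theory Submission
  imports Defs
begin

lemma root_sum:
  fixes m :: int
  assumes n: "n > 0" and nd: "\<not> int n dvd m"
  shows "(\<Sum>k<n. cis (2*pi*real k* of_int m/real n)) = 0"
proof -
  define w where "w = cis (2*pi* of_int m/real n)"
  have w1: "w \<noteq> 1"
  proof
    assume "w = 1"
    then obtain t :: int where "2*pi* of_int m/real n = of_int t*2*pi"
      by (auto simp: w_def complex_eq_iff cos_one_2pi_int)
    with n have "of_int m = real n * of_int t" by (simp add: field_simps)
    hence "m = int n * t" by (metis of_int_eq_iff of_int_mult of_int_of_nat_eq)
    with nd show False by simp
  qed
  have "(\<Sum>k<n. cis (2*pi*real k* of_int m/real n)) = (\<Sum>k<n. w^k)"
  proof (intro sum.cong refl)
    fix k assume "k \<in> {..<n}"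
    have "w^k = cis (real k * (2*pi* of_int m/real n))" by (simp only: w_def Complex.DeMoivre)
    also have "real k * (2*pi* of_int m/real n) = 2*pi*real k * of_int m/real n" by simp
    finally show "cis (2*pi*real k * of_int m/real n) = w^k" by simp
  qed
  also have "\<dots> = (w^n - 1)/(w - 1)" using w1 by (rule geometric_sum)
  also have "w^n = 1"
  proof -
    have "w^n = cis (real n * (2*pi* of_int m/real n))" by (simp only: w_def Complex.DeMoivre)
    also have "real n * (2*pi* of_int m/real n) = 2*pi* of_int m" using n by simp
    also have "cis (2*pi* of_int m) = 1" by (rule cis_multiple_2pi) simp
    finally show ?thesis .
  qed
  finally show ?thesis by simp
qed

lemma cis_period:
  fixes m :: int
  assumes n: "n > 0"
  shows "cis (2*pi*real k* of_int (m mod int n)/real n) = cis (2*pi*real k* of_int m/real n)"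
proof -
  have m: "m = m mod int n + int n * (m div int n)" by simp
  have "2*pi*real k* of_int m/real n = 2*pi*real k* of_int (m mod int n)/real n + 2*pi* of_int (int k*(m div int n))"
  proof -
    have mr: "real_of_int m = of_int (m mod int n) + real n * of_int (m div int n)"
      by (metis m of_int_add of_int_mult of_int_of_nat_eq)
    show ?thesis using n by (simp add: mr field_simps)
  qed
  hence "cis (2*pi*real k* of_int m/real n) = cis (2*pi*real k* of_int (m mod int n)/real n) * cis (2*pi* of_int (int k*(m div int n)))"
    by (simp only: cis_mult)
  also have "cis (2*pi* of_int (int k*(m div int n))) = 1" by (rule cis_multiple_2pi) simp
  finally show ?thesis by simp
qed

lemma reindex_mod:
  fixes g :: "int \<Rightarrow> complex"
  assumes n: "n > 0" and per: "\<And>m. g (m mod int n) = g m" and i: "i < n"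
  shows "(\<Sum>j<n. g (int i - int j)) = (\<Sum>d<n. g (int d))"
proof -
  have "(\<Sum>j<n. g (int i - int j)) = (\<Sum>j<n. g (int (nat ((int i - int j) mod int n))))"
    using n by (intro sum.cong refl) (simp add: per)
  also have "\<dots> = (\<Sum>d<n. g (int d))"
  proof (rule sum.reindex_bij_betw)
    show "bij_betw (\<lambda>j. nat ((int i - int j) mod int n)) {..<n} {..<n}"
    proof (rule bij_betw_byWitness[where f'="\<lambda>d. nat ((int i - int d) mod int n)"])
      show "\<forall>a\<in>{..<n}. nat ((int i - int (nat ((int i - int a) mod int n))) mod int n) = a"
      proof
        fix a assume a: "a \<in> {..<n}"
        have "int (nat ((int i - int a) mod int n)) = (int i - int a) mod int n" using n by simp
        hence "(int i - int (nat ((int i - int a) mod int n))) mod int n = (int i - (int i - int a)) mod int n"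
          by (simp add: mod_diff_right_eq)
        also have "\<dots> = int a" using a by simp
        finally show "nat ((int i - int (nat ((int i - int a) mod int n))) mod int n) = a" by simp
      qed
      show "\<forall>a\<in>{..<n}. nat ((int i - int (nat ((int i - int a) mod int n))) mod int n) = a"
        by fact
      show "(\<lambda>j. nat ((int i - int j) mod int n)) ` {..<n} \<subseteq> {..<n}"
        using n by (auto simp: nat_less_iff)
      show "(\<lambda>j. nat ((int i - int j) mod int n)) ` {..<n} \<subseteq> {..<n}"
        using n by (auto simp: nat_less_iff)
    qed
  qed
  finally show ?thesis .
qed


definition F :: "nat \<Rightarrow> nat \<Rightarrow> nat \<Rightarrow> complex" where
  "F n k i = (if i < n then cis (2*pi*real k*real i/real n) / complex_of_real (sqrt (real n)) else 0)"

lemma F_prod: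
  assumes n: "n > 0" and i: "i < n" and j: "j < n"
  shows "F n k i * cnj (F n l j) = cis (2*pi*real k*real i/real n - 2*pi*real l*real j/real n) / of_real (real n)"
proof -
  have s: "complex_of_real (sqrt (real n)) * complex_of_real (sqrt (real n)) = of_real (real n)"
  proof -
    have "complex_of_real (sqrt (real n)) * complex_of_real (sqrt (real n)) = of_real (sqrt (real n) * sqrt (real n))"
      by (rule of_real_mult[symmetric])
    also have "sqrt (real n) * sqrt (real n) = real n" by simp
    finally show ?thesis .
  qed
  have "F n k i * cnj (F n l j) = cis (2*pi*real k*real i/real n) * cis (-(2*pi*real l*real j/real n))
      / (complex_of_real (sqrt (real n)) * complex_of_real (sqrt (real n)))"
    using i j unfolding F_def by (simp add: cis_cnj)
  also have "\<dots> = cis (2*pi*real k*real i/real n - 2*pi*real l*real j/real n) / of_real (real n)"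
    by (simp only: s cis_mult diff_conv_add_uminus)
  finally show ?thesis .
qed

lemma sum_delta:
  assumes n: "n > 0" and k: "k < n" and l: "l < n"
  shows "(\<Sum>i<n. cis (2*pi*real i*real_of_int (int k - int l)/real n)) = (if k = l then of_nat n else 0)"
proof (cases "k = l")
  case True then show ?thesis by simp
next
  case False
  have "\<not> int n dvd (int k - int l)"
  proof
    assume "int n dvd (int k - int l)"
    then obtain t where t: "int k - int l = int n * t" by blast
    have "\<bar>int k - int l\<bar> < int n" using k l by linarith
    have "t \<noteq> 0" using t False by auto
    hence "\<bar>t\<bar> \<ge> 1" by linarith
    hence "int n * 1 \<le> int n * \<bar>t\<bar>" by (intro mult_left_mono) auto
    moreover have "\<bar>int n * t\<bar> = int n * \<bar>t\<bar>" by (simp add: abs_mult)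
    ultimately show False using t \<open>\<bar>int k - int l\<bar> < int n\<close> by linarith
  qed
  from root_sum[OF n this] False show ?thesis by simp
qed

lemma F_inner:
  assumes n: "n > 0" and k: "k < n" and l: "l < n"
  shows "cinner n (F n k) (F n l) = (if k = l then 1 else 0)"
proof -
  have "cinner n (F n k) (F n l) = (\<Sum>i<n. cis (2*pi*real i*real_of_int (int k - int l)/real n) / of_real (real n))"
    unfolding cinner_def
  proof (intro sum.cong refl)
    fix i assume "i \<in> {..<n}"
    hence i: "i < n" by simp
    have "2*pi*real k*real i/real n - 2*pi*real l*real i/real n = 2*pi*real i*real_of_int (int k - int l)/real n"
      by (simp add: diff_divide_distrib[symmetric] algebra_simps)
    thus "F n k i * cnj (F n l i) = cis (2*pi*real i*real_of_int (int k - int l)/real n) / of_real (real n)"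
      using F_prod[OF n i i] by simp
  qed
  also have "\<dots> = (\<Sum>i<n. cis (2*pi*real i*real_of_int (int k - int l)/real n)) / of_real (real n)"
    by (simp add: sum_divide_distrib)
  also have "\<dots> = (if k = l then 1 else 0)" using sum_delta[OF n k l] n by simp
  finally show ?thesis .
qed

lemma F_dual:
  assumes n: "n > 0" and i: "i < n" and j: "j < n"
  shows "(\<Sum>k<n. cnj (F n k j) * F n k i) = (if i = j then 1 else 0)"
proof -
  have "(\<Sum>k<n. cnj (F n k j) * F n k i) = (\<Sum>k<n. cis (2*pi*real k*real_of_int (int i - int j)/real n) / of_real (real n))"
  proof (intro sum.cong refl)
    fix k assume "k \<in> {..<n}"
    have "2*pi*real k*real i/real n - 2*pi*real k*real j/real n = 2*pi*real k*real_of_int (int i - int j)/real n"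
      by (simp add: diff_divide_distrib[symmetric] algebra_simps)
    thus "cnj (F n k j) * F n k i = cis (2*pi*real k*real_of_int (int i - int j)/real n) / of_real (real n)"
      using F_prod[OF n i j, of k k] by (simp add: mult.commute)
  qed
  also have "\<dots> = (\<Sum>k<n. cis (2*pi*real k*real_of_int (int i - int j)/real n)) / of_real (real n)"
    by (simp add: sum_divide_distrib)
  also have "\<dots> = (if i = j then 1 else 0)"
    using sum_delta[OF n i j] n by (simp add: mult.commute)
  finally show ?thesis .
qed


lemma F_eigen:
  assumes n: "n > 0"
  shows "\<exists>ev. \<forall>i<n. (\<Sum>j<n. circ_adj n a i j * F n k j) = ev * F n k i"
proof -
  define c :: "int \<Rightarrow> complex" where "c m = (if \<exists>b\<in>a. m mod int n = int b mod int n
              \<or> m mod int n = (- int b) mod int n then 1 else 0)" for m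
  define g where "g m = c m * cis (2*pi*real k * of_int (-m)/real n)" for m
  have adj: "circ_adj n a i j = c (int i - int j)" for i j
    unfolding circ_adj_def c_def by simp
  have per: "g (m mod int n) = g m" for m
  proof -
    have c1: "c (m mod int n) = c m" unfolding c_def by simp
    have "cis (2*pi*real k * of_int (-(m mod int n))/real n) = cis (2*pi*real k * of_int ((-(m mod int n)) mod int n)/real n)"
      using cis_period[OF n] by simp
    also have "(-(m mod int n)) mod int n = (-m) mod int n" by (rule mod_minus_eq)
    also have "cis (2*pi*real k * of_int ((-m) mod int n)/real n) = cis (2*pi*real k * of_int (-m)/real n)"
      by (rule cis_period[OF n])
    finally show ?thesis unfolding g_def c1 by simp
  qed
  have main: "(\<Sum>j<n. circ_adj n a i j * F n k j) = (\<Sum>d<n. g (int d)) * F n k i" if i: "i < n" for i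
  proof -
  have tm: "circ_adj n a i j * F n k j = F n k i * g (int i - int j)" if j: "j < n" for j
  proof -
    have arg: "2*pi*real k*real i/real n + 2*pi*real k * of_int (-(int i - int j))/real n = 2*pi*real k*real j/real n"
      by (simp add: add_divide_distrib[symmetric] algebra_simps)
    have "F n k i * g (int i - int j) = c (int i - int j) * (cis (2*pi*real k*real i/real n) * cis (2*pi*real k * of_int (-(int i - int j))/real n)) / complex_of_real (sqrt (real n))"
      using i unfolding F_def g_def by simp
    also have "\<dots> = c (int i - int j) * cis (2*pi*real k*real j/real n) / complex_of_real (sqrt (real n))"
      by (simp only: cis_mult arg)
    also have "\<dots> = circ_adj n a i j * F n k j" using j unfolding F_def adj by simp
    finally show ?thesis by simp
  qed
  have "(\<Sum>j<n. circ_adj n a i j * F n k j) = (\<Sum>j<n. F n k i * g (int i - int j))"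
    using tm by (intro sum.cong refl) auto
  also have "\<dots> = F n k i * (\<Sum>j<n. g (int i - int j))" by (simp add: sum_distrib_left)
  also have "(\<Sum>j<n. g (int i - int j)) = (\<Sum>d<n. g (int d))" by (rule reindex_mod[where g=g, OF n per i])
  finally show ?thesis by (metis mult.commute)
  qed
  thus ?thesis by blast
qed

lemma F_measure:
  assumes n: "n > 0" and S: "S \<subseteq> {..<n}"
  shows "vmeasure (F n k) S = real (card S) / real n"
proof -
  have "(cmod (F n k v))^2 = 1 / real n" if v: "v \<in> S" for v
  proof -
    have "v < n" using v S by auto
    hence "cmod (F n k v) = 1 / sqrt (real n)" unfolding F_def by (simp add: norm_divide)
    thus ?thesis by (simp add: power_divide)
  qed
  hence "vmeasure (F n k) S = (\<Sum>v\<in>S. 1 / real n)" unfolding vmeasure_def by (intro sum.cong refl) auto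
  thus ?thesis by simp
qed


lemma F_inj: assumes n: "n > 0" shows "inj_on (F n) {..<n}"
proof (rule inj_onI)
  fix k l assume k: "k \<in> {..<n}" and l: "l \<in> {..<n}" and e: "F n k = F n l"
  have "cinner n (F n k) (F n l) = 1" using F_inner[OF n, of k k] k e by simp
  thus "k = l" using F_inner[OF n, of k l] k l by (simp split: if_splits)
qed

lemma F_basis:
  assumes n: "n > 0"
  shows "orthonormal_eigenbasis n (circ_adj n a) (F n ` {..<n})"
  unfolding orthonormal_eigenbasis_def orthonormal_basis_def
proof (intro conjI ballI allI impI)
  show "finite (F n ` {..<n})" by simp
next
  fix v assume "v \<in> F n ` {..<n}"
  then obtain k where k: "k < n" and v: "v = F n k" by auto
  show "cvec n v" unfolding v cvec_def F_def by simp
  show "cinner n v v = 1" using F_inner[OF n k k] v by simp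
  have "F n k 0 \<noteq> 0" using n unfolding F_def by simp
  moreover have "\<exists>ev. \<forall>i<n. (\<Sum>j<n. circ_adj n a i j * v j) = ev * v i"
    using F_eigen[OF n, of a k] v by simp
  ultimately show "is_eigenvector n (circ_adj n a) v"
    unfolding is_eigenvector_def v cvec_def F_def using n by auto
next
  fix v w assume "v \<in> F n ` {..<n}" "w \<in> F n ` {..<n}" "v \<noteq> w"
  then obtain k l where "k < n" "l < n" "v = F n k" "w = F n l" "k \<noteq> l" by auto
  thus "cinner n v w = 0" using F_inner[OF n] by simp
next
  fix x :: "nat \<Rightarrow> complex" assume x: "cvec n x"
  show "\<exists>c. x = (\<lambda>i. \<Sum>v\<in>F n ` {..<n}. c v * v i)"
  proof (intro exI ext)
    fix i
    have "(\<Sum>v\<in>F n ` {..<n}. cinner n x v * v i) = (\<Sum>k<n. cinner n x (F n k) * F n k i)"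
      by (subst sum.reindex[OF F_inj[OF n]]) simp
    also have "\<dots> = x i"
    proof (cases "i < n")
      case True
      have "(\<Sum>k<n. cinner n x (F n k) * F n k i) = (\<Sum>k<n. \<Sum>j<n. x j * (cnj (F n k j) * F n k i))"
        unfolding cinner_def by (simp add: sum_distrib_right mult.assoc)
      also have "\<dots> = (\<Sum>j<n. x j * (\<Sum>k<n. cnj (F n k j) * F n k i))"
        by (subst sum.swap) (simp add: sum_distrib_left)
      also have "\<dots> = (\<Sum>j<n. x j * (if i = j then 1 else 0))"
        using F_dual[OF n True] by (intro sum.cong refl) simp
      also have "\<dots> = (\<Sum>j<n. if i = j then x i else 0)" by (intro sum.cong refl) auto
      also have "\<dots> = x i" using True by (simp add: sum.delta)
      finally show ?thesis .
    next
      case False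
      thus ?thesis using x unfolding cvec_def F_def by simp
    qed
    finally show "x i = (\<Sum>v\<in>F n ` {..<n}. cinner n x v * v i)" by simp
  qed
qed


theorem proposition1:
  fixes A :: "nat set" and a :: "nat \<Rightarrow> nat set"
  assumes "infinite A"
    and "\<forall>n\<in>A. circulant_steps n (a n)"
  shows "\<exists>B :: nat \<Rightarrow> (nat \<Rightarrow> complex) set.
           (\<forall>n\<in>A. orthonormal_eigenbasis n (circ_adj n (a n)) (B n)) \<and>
           (\<forall>(p::real) (S :: nat \<Rightarrow> nat set) (\<phi> :: nat \<Rightarrow> nat \<Rightarrow> complex).
              0 \<le> p \<and> p \<le> 1 \<and> (\<forall>n\<in>A. S n \<subseteq> {..<n}) \<and>
              ((\<lambda>n. real (card (S n)) / real n) \<longlongrightarrow> p) (inf sequentially (principal A)) \<and>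
              (\<forall>n\<in>A. \<phi> n \<in> B n)
              \<longrightarrow> ((\<lambda>n. vmeasure (\<phi> n) (S n)) \<longlongrightarrow> p) (inf sequentially (principal A)))"
proof -
  have npos: "n > 0" if "n \<in> A" for n
  proof -
    from assms(2) that have "a n \<noteq> {}" "a n \<subseteq> {1..n div 2}" unfolding circulant_steps_def by auto
    then obtain b where "b \<in> a n" by auto
    with \<open>a n \<subseteq> {1..n div 2}\<close> have "1 \<le> b" "b \<le> n div 2" by auto
    thus ?thesis by linarith
  qed
  show ?thesis
  proof (intro exI[of _ "\<lambda>n. F n ` {..<n}"] conjI ballI allI impI)
    fix n assume "n \<in> A"
    thus "orthonormal_eigenbasis n (circ_adj n (a n)) (F n ` {..<n})" using F_basis npos by blast
  next
    fix p :: real and S :: "nat \<Rightarrow> nat set" and \<phi> :: "nat \<Rightarrow> nat \<Rightarrow> complex"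
    assume h: "0 \<le> p \<and> p \<le> 1 \<and> (\<forall>n\<in>A. S n \<subseteq> {..<n}) \<and>
              ((\<lambda>n. real (card (S n)) / real n) \<longlongrightarrow> p) (inf sequentially (principal A)) \<and>
              (\<forall>n\<in>A. \<phi> n \<in> F n ` {..<n})"
    have ev: "eventually (\<lambda>n. real (card (S n)) / real n = vmeasure (\<phi> n) (S n)) (inf sequentially (principal A))"
      unfolding eventually_inf_principal
    proof (rule always_eventually, intro allI impI)
      fix n assume n: "n \<in> A"
      then obtain k where "\<phi> n = F n k" using h by auto
      thus "real (card (S n)) / real n = vmeasure (\<phi> n) (S n)"
        using F_measure[OF npos[OF n], of "S n" k] h n by simp
    qed
    show "((\<lambda>n. vmeasure (\<phi> n) (S n)) \<longlongrightarrow> p) (inf sequentially (principal A))"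
      using h tendsto_cong[OF ev] by simp
  qed
qed

end
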